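(* Let $\mathfrak L=\mathbb V\oplus\mathbb W$ be a color gLt-algebra admitting a quasi-multiplicative basis $\mathfrak B=\{e_i\}_{i\in I}$ of $\mathbb W\neq 0$. If $\mathfrak L$ is simple, then any two elements of the index set $I$ are connected.
   Context: Let $\mathbb F$ be a field, $\mathbb G$ an abelian group, $n\ge 2$, and $\epsilon:\mathbb G\times\mathbb G\to\mathbb F\setminus\{0\}$ a bicharacter ($\epsilon(k,g+h)=\epsilon(k,g)\epsilon(k,h)$, $\epsilon(g+h,k)=\epsilon(g,k)\epsilon(h,k)$, $\epsilon(g,h)\epsilon(h,g)=1$). A graded $n$-ary algebra is a $\mathbb G$-graded vector space $\mathfrak L=\bigoplus_{g\in\mathbb G}\mathfrak L_g$ with an $n$-linear map $\langle\cdot,\dots,\cdot\rangle:\mathfrak L^n\to\mathfrak L$ such that $\langle\mathfrak L_{g_1},\dots,\mathfrak L_{g_n}\rangle\subset\mathfrak L_{g_1+\dots+g_n}$. For $\sigma\in\mathbb S_n$ write $\langle x_1,\dots,x_n\rangle_\sigma:=\langle x_{\sigma(1)},\dots,x_{\sigma(n)}\rangle$; for subsets $A_1,\dots,A_n$, $\langle A_1,\dots,A_n\rangle_\sigma$ denotes the linear span of all $\langle x_1,\dots,x_n\rangle_\sigma$ with $x_r\in A_r$. A color gLt-algebra is a graded $n$-ary algebra satisfying, for each $k=1,\dots,n$ and fixed scalars $\alpha^{\sigma_1,\sigma_2}_{i,j,k}\in\mathbb F$, the color version (each term on the right multiplied by the product of values of $\epsilon$ on the degrees of the homogeneous arguments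 transposed in passing from the left-hand order to the order of that term) of the identity $\langle y_1,\dots,y_{k-1},\langle x_1,\dots,x_n\rangle,y_k,\dots,y_{n-1}\rangle=\sum_{1\le i,j\le n,\,\sigma_1\in\mathbb S_n,\,\sigma_2\in\mathbb S_{n-1}}\alpha^{\sigma_1,\sigma_2}_{i,j,k}\langle x_{\sigma_1(1)},\dots,x_{\sigma_1(i-1)},\langle y_{\sigma_2(1)},\dots,y_{\sigma_2(j-1)},x_{\sigma_1(i)},y_{\sigma_2(j)},\dots,y_{\sigma_2(n-1)}\rangle,x_{\sigma_1(i+1)},\dots,x_{\sigma_1(n)}\rangle$. A $\mathbb G$-graded subspace $\mathcal I\subset\mathfrak L$ is a color gLt-ideal if $\langle\mathcal I,\mathfrak L,\dots,\mathfrak L\rangle_\sigma\subset\mathcal I$ for every $\sigma\in\mathbb S_n$. $\mathfrak L$ is simple if its only color gLt-ideals are $\{0\}$ and $\mathfrak L$. $\mathfrak L$ admits a quasi-multiplicative basis if $\mathfrak L=\mathbb V\oplus\mathbb W$ with $\mathbb V$, $\mathbb W\ne0$ graded subspaces and $\mathfrak B=\{e_i\}_{i\in I}$ a basis of homogeneous elements of $\mathbb W$ such that: (1) for $i_1,\dots,i_n\in I$, either $\langle e_{i_1},\dots,e_{i_n}\rangle\in\mathbb Fe_j$ for some $j\in I$ or $\langle e_{i_1},\dots,e_{i_n}\rangle\in\mathbb V$; (2) for $0<k<n$, $i_1,\dots,i_k\in I$ and $\sigma\in\mathbb S_n$, $\langle e_{i_1},\dots,e_{i_k},\mathbb V,\dots,\mathbb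 V\rangle_\sigma\subset\mathbb Fe_{j_\sigma}$ for some $j_\sigma\in I$; (3) either $\langle\mathbb V,\dots,\mathbb V\rangle\subset\mathbb Fe_j$ for some $j\in I$ or $\langle\mathbb V,\dots,\mathbb V\rangle\subset\mathbb V$. Index maps: let $v$ be a symbol not in $I$, $\mathfrak I:=I\,\dot\cup\,\{v\}$; for each $j\in\mathfrak I$ take a new symbol $\overline j$, $\overline I:=\{\overline i:i\in I\}$, $\overline{\mathfrak I}:=\overline I\,\dot\cup\,\{\overline v\}$; set $\overline{(\overline j)}:=j$, $\overline J:=\{\overline j:j\in J\}$ for a set $J$ of symbols ($\overline\emptyset=\emptyset$). Put $u_j:=e_j$ for $j\in I$ and $u_v:=\mathbb V$. For $\sigma\in\mathbb S_n$ and $(j_1,\dots,j_n)\in\mathfrak I^n$ let $a_\sigma(j_1,\dots,j_n)=\{r\}$ if $r\in I$ and $0\ne\langle u_{j_1},\dots,u_{j_n}\rangle_\sigma\subset\mathbb Fe_r$, $=\{v\}$ if $0\ne\langle u_{j_1},\dots,u_{j_n}\rangle_\sigma\subset\mathbb V$, and $=\emptyset$ otherwise. For $j,j_2,\dots,j_n\in\mathfrak I$ let $b_\sigma(j,\overline j_2,\dots,\overline j_n):=\{x\in\mathfrak I: a_\sigma(x,j_2,\dots,j_n)=\{j\}\}$. Define $\mu$ on $(\mathfrak I\,\dot\cup\,\overline{\mathfrak I})\times(\mathfrak I^{n-1}\,\dot\cup\,\overline{\mathfrak I}^{n-1})$ with values subsets of $\mathfrak I$ by: $\mu(j,j_1,\dots,j_{n-1})=\bigcup_{\sigma\in\mathbb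 S_n}a_\sigma(j,j_1,\dots,j_{n-1})$ for $j,j_1,\dots,j_{n-1}\in\mathfrak I$; $\mu(j,\overline j_1,\dots,\overline j_{n-1})=\bigcup_{\sigma\in\mathbb S_n}b_\sigma(j,\overline j_1,\dots,\overline j_{n-1})$ for $j,j_1,\dots,j_{n-1}\in\mathfrak I$; $\mu(\overline j,j_1,\dots,j_{n-1})=\bigcup_{1\le k\le n-1,\ \sigma\in\mathbb S_n}b_\sigma(j_k,\overline j,\overline j_1,\dots,\overline j_{k-1},\overline j_{k+1},\dots,\overline j_{n-1})$ for $j,j_1,\dots,j_{n-1}\in\mathfrak I$; and $\mu(\overline j,\overline j_1,\dots,\overline j_{n-1})=\emptyset$. Define $\phi$ on pairs $(J,X)$ with $J\subset I\,\dot\cup\,\overline I$ and $X\in\mathfrak I^{n-1}\,\dot\cup\,\overline{\mathfrak I}^{n-1}$ by $\phi(\emptyset,X)=\emptyset$ and, for $J\ne\emptyset$, $\phi(J,X):=K\cup\overline K$ where $K:=\big(\bigcup_{j\in J}\mu(j,X)\big)\setminus\{v\}$. Connections: for distinct $i,j\in I$, $i$ is connected to $j$ if there exist $t\ge1$, $X_1,\dots,X_t\in\mathfrak I^{n-1}\,\dot\cup\,\overline{\mathfrak I}^{n-1}$ and $\widetilde i\in\{i,\overline i\}$ such that $\phi(\{\widetilde i\},X_1)\ne\emptyset$, …, $\phi(\cdots\phi(\{\widetilde i\},X_1)\cdots,X_{t-1})\ne\emptyset$, and $j\in\phi(\cdots\phi(\phi(\{\widetilde i\},X_1),X_2)\cdots,X_t)$;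 every $i$ is connected to itself. *)

theory Defs
  imports Complex_Main "HOL-Combinatorics.Permutations"
begin

text \<open>Conventions: the n-ary product is a function br :: (nat => 'v) => 'v whose
  arguments are indexed 0..n-1 (0-based). The field is 'k, the grading group is 'g,
  the algebra is the whole type 'v (a vector space over 'k via scale).
  The index set I of the basis is the type 'i; the extra symbol v is None in 'i option.
  A barred symbol is tagged with Inr, an unbarred one with Inl.\<close>

definition ins :: "nat \<Rightarrow> 'a \<Rightarrow> (nat \<Rightarrow> 'a) \<Rightarrow> nat \<Rightarrow> 'a" where
  "ins k z f p = (if p < k then f p else if p = k then z else f (p - 1))"

definition del :: "nat \<Rightarrow> (nat \<Rightarrow> 'a) \<Rightarrow> nat \<Rightarrow> 'a" where
  "del k f p = (if p < k then f p else f (Suc p))"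

definition perms :: "nat \<Rightarrow> (nat \<Rightarrow> nat) set" where
  "perms n = {\<sigma>. \<sigma> permutes {..<n}}"

definition hom_decomp :: "('g \<Rightarrow> 'v set) \<Rightarrow> 'v::comm_monoid_add \<Rightarrow> ('g \<Rightarrow> 'v) \<Rightarrow> bool" where
  "hom_decomp Lg x c \<longleftrightarrow> finite {g. c g \<noteq> 0} \<and> (\<forall>g. c g \<in> Lg g) \<and> x = (\<Sum>g\<in>{g. c g \<noteq> 0}. c g)"

definition graded_space :: "('k::field \<Rightarrow> 'v::ab_group_add \<Rightarrow> 'v) \<Rightarrow> ('g \<Rightarrow> 'v set) \<Rightarrow> bool" where
  "graded_space scale Lg \<longleftrightarrow> vector_space scale \<and> (\<forall>g. module.subspace scale (Lg g))
     \<and> (\<forall>x. \<exists>!c. hom_decomp Lg x c)"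

definition graded_subspace :: "('k::field \<Rightarrow> 'v::ab_group_add \<Rightarrow> 'v) \<Rightarrow> ('g \<Rightarrow> 'v set) \<Rightarrow> 'v set \<Rightarrow> bool" where
  "graded_subspace scale Lg S \<longleftrightarrow> module.subspace scale S
     \<and> (\<forall>x\<in>S. \<forall>c. hom_decomp Lg x c \<longrightarrow> (\<forall>g. c g \<in> S))"

definition bicharacter :: "('g::ab_group_add \<Rightarrow> 'g \<Rightarrow> 'k::field) \<Rightarrow> bool" where
  "bicharacter eps \<longleftrightarrow> (\<forall>g h. eps g h \<noteq> 0)
     \<and> (\<forall>k g h. eps k (g + h) = eps k g * eps k h)
     \<and> (\<forall>g h k. eps (g + h) k = eps g k * eps h k)
     \<and> (\<forall>g h. eps g h * eps h g = 1)"

definition multilinear :: "('k::field \<Rightarrow> 'v::ab_group_add \<Rightarrow> 'v) \<Rightarrow> nat \<Rightarrow> ((nat \<Rightarrow> 'v) \<Rightarrow> 'v) \<Rightarrow> bool" where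
  "multilinear scale n br \<longleftrightarrow>
     (\<forall>f f'. (\<forall>p<n. f p = f' p) \<longrightarrow> br f = br f')
   \<and> (\<forall>f p a b. p < n \<longrightarrow> br (f(p := a + b)) = br (f(p := a)) + br (f(p := b)))
   \<and> (\<forall>f p c a. p < n \<longrightarrow> br (f(p := scale c a)) = scale c (br (f(p := a))))"

definition graded_product :: "('g::ab_group_add \<Rightarrow> 'v set) \<Rightarrow> nat \<Rightarrow> ((nat \<Rightarrow> 'v) \<Rightarrow> 'v) \<Rightarrow> bool" where
  "graded_product Lg n br \<longleftrightarrow>
     (\<forall>d f. (\<forall>p<n. f p \<in> Lg (d p)) \<longrightarrow> br f \<in> Lg (\<Sum>p<n. d p))"

(* color factor: atoms Inl a = x_a (a < n), Inr b = y_b (b < n-1).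
   posL = position in the left-hand order y_0..y_{k-1}, x_0..x_{n-1}, y_k..y_{n-2};
   posR = position in the order of the right-hand term
   x_{s1 0}..x_{s1(i-1)}, y_{s2 0}..y_{s2(j-1)}, x_{s1 i}, y_{s2 j}..y_{s2(n-2)}, x_{s1(i+1)}..x_{s1(n-1)} *)

definition atoms :: "nat \<Rightarrow> (nat + nat) set" where
  "atoms n = Inl ` {..<n} \<union> Inr ` {..<n - 1}"

definition posL :: "nat \<Rightarrow> nat \<Rightarrow> nat + nat \<Rightarrow> nat" where
  "posL n k t = (case t of Inl a \<Rightarrow> k + a | Inr b \<Rightarrow> (if b < k then b else b + n))"

definition posR :: "nat \<Rightarrow> nat \<Rightarrow> nat \<Rightarrow> (nat \<Rightarrow> nat) \<Rightarrow> (nat \<Rightarrow> nat) \<Rightarrow> nat + nat \<Rightarrow> nat" where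
  "posR n i j s1 s2 t = (case t of
      Inl a \<Rightarrow> (let q = inv s1 a in if q < i then q else if q = i then i + j else q + n - 1)
    | Inr b \<Rightarrow> (let r = inv s2 b in if r < j then i + r else i + r + 1))"

definition color_factor :: "('g \<Rightarrow> 'g \<Rightarrow> 'k::field) \<Rightarrow> nat \<Rightarrow> nat \<Rightarrow> nat \<Rightarrow> nat
     \<Rightarrow> (nat \<Rightarrow> nat) \<Rightarrow> (nat \<Rightarrow> nat) \<Rightarrow> (nat \<Rightarrow> 'g) \<Rightarrow> (nat \<Rightarrow> 'g) \<Rightarrow> 'k" where
  "color_factor eps n k i j s1 s2 dx dy =
     (\<Prod>(a, b)\<in>{(a, b). a \<in> atoms n \<and> b \<in> atoms n \<and> posL n k a < posL n k b
                         \<and> posR n i j s1 s2 b < posR n i j s1 s2 a}.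
        eps (case_sum dx dy a) (case_sum dx dy b))"

definition gLt_identity :: "('k::field \<Rightarrow> 'v::ab_group_add \<Rightarrow> 'v) \<Rightarrow> ('g \<Rightarrow> 'v set)
    \<Rightarrow> ('g \<Rightarrow> 'g \<Rightarrow> 'k) \<Rightarrow> nat \<Rightarrow> ((nat \<Rightarrow> 'v) \<Rightarrow> 'v)
    \<Rightarrow> (nat \<Rightarrow> nat \<Rightarrow> nat \<Rightarrow> (nat \<Rightarrow> nat) \<Rightarrow> (nat \<Rightarrow> nat) \<Rightarrow> 'k) \<Rightarrow> bool" where
  "gLt_identity scale Lg eps n br alpha \<longleftrightarrow>
     (\<forall>k<n. \<forall>dx dy xs ys. (\<forall>p<n. xs p \<in> Lg (dx p)) \<and> (\<forall>p<n - 1. ys p \<in> Lg (dy p)) \<longrightarrow>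
        br (ins k (br xs) ys) =
        (\<Sum>i<n. \<Sum>j<n. \<Sum>s1\<in>perms n. \<Sum>s2\<in>perms (n - 1).
           scale (alpha i j k s1 s2 * color_factor eps n k i j s1 s2 dx dy)
             (br (ins i (br (ins j (xs (s1 i)) (ys \<circ> s2))) (del i (xs \<circ> s1))))))"

definition color_gLt :: "('k::field \<Rightarrow> 'v::ab_group_add \<Rightarrow> 'v) \<Rightarrow> ('g::ab_group_add \<Rightarrow> 'v set)
    \<Rightarrow> ('g \<Rightarrow> 'g \<Rightarrow> 'k) \<Rightarrow> nat \<Rightarrow> ((nat \<Rightarrow> 'v) \<Rightarrow> 'v) \<Rightarrow> bool" where
  "color_gLt scale Lg eps n br \<longleftrightarrow> graded_space scale Lg \<and> bicharacter eps
     \<and> multilinear scale n br \<and> graded_product Lg n br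
     \<and> (\<exists>alpha. gLt_identity scale Lg eps n br alpha)"

(* <A_1,...,A_n>_sigma : span of all <x_{sigma 0},...,x_{sigma(n-1)}> with x_r in A_r *)
definition prod_sp :: "('k::field \<Rightarrow> 'v::ab_group_add \<Rightarrow> 'v) \<Rightarrow> nat \<Rightarrow> ((nat \<Rightarrow> 'v) \<Rightarrow> 'v)
    \<Rightarrow> (nat \<Rightarrow> nat) \<Rightarrow> (nat \<Rightarrow> 'v set) \<Rightarrow> 'v set" where
  "prod_sp scale n br \<sigma> A = module.span scale {br (\<lambda>p. x (\<sigma> p)) | x. \<forall>r<n. x r \<in> A r}"

definition gLt_ideal :: "('k::field \<Rightarrow> 'v::ab_group_add \<Rightarrow> 'v) \<Rightarrow> ('g \<Rightarrow> 'v set) \<Rightarrow> nat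
    \<Rightarrow> ((nat \<Rightarrow> 'v) \<Rightarrow> 'v) \<Rightarrow> 'v set \<Rightarrow> bool" where
  "gLt_ideal scale Lg n br S \<longleftrightarrow> graded_subspace scale Lg S
     \<and> (\<forall>\<sigma>\<in>perms n. prod_sp scale n br \<sigma> (\<lambda>r. if r = 0 then S else UNIV) \<subseteq> S)"

definition simple_alg :: "('k::field \<Rightarrow> 'v::ab_group_add \<Rightarrow> 'v) \<Rightarrow> ('g \<Rightarrow> 'v set) \<Rightarrow> nat
    \<Rightarrow> ((nat \<Rightarrow> 'v) \<Rightarrow> 'v) \<Rightarrow> bool" where
  "simple_alg scale Lg n br \<longleftrightarrow> (\<forall>S. gLt_ideal scale Lg n br S \<longrightarrow> S = {0} \<or> S = UNIV)"

definition line :: "('k \<Rightarrow> 'v \<Rightarrow> 'v) \<Rightarrow> ('i \<Rightarrow> 'v) \<Rightarrow> 'i \<Rightarrow> 'v set" where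
  "line scale e j = range (\<lambda>c. scale c (e j))"

definition lin_indep_family :: "('k::field \<Rightarrow> 'v::ab_group_add \<Rightarrow> 'v) \<Rightarrow> ('i \<Rightarrow> 'v) \<Rightarrow> bool" where
  "lin_indep_family scale e \<longleftrightarrow>
     (\<forall>S c. finite S \<and> (\<Sum>i\<in>S. scale (c i) (e i)) = 0 \<longrightarrow> (\<forall>i\<in>S. c i = 0))"

definition qm_basis :: "('k::field \<Rightarrow> 'v::ab_group_add \<Rightarrow> 'v) \<Rightarrow> ('g \<Rightarrow> 'v set) \<Rightarrow> nat
    \<Rightarrow> ((nat \<Rightarrow> 'v) \<Rightarrow> 'v) \<Rightarrow> 'v set \<Rightarrow> 'v set \<Rightarrow> ('i \<Rightarrow> 'v) \<Rightarrow> bool" where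
  "qm_basis scale Lg n br V W e \<longleftrightarrow>
     graded_subspace scale Lg V \<and> graded_subspace scale Lg W
   \<and> V \<inter> W = {0} \<and> (\<forall>x. \<exists>v\<in>V. \<exists>w\<in>W. x = v + w) \<and> V \<noteq> {0} \<and> W \<noteq> {0}
   \<and> (\<forall>i. \<exists>g. e i \<in> Lg g) \<and> lin_indep_family scale e \<and> module.span scale (range e) = W
   \<and> (\<forall>is. (\<exists>j. br (\<lambda>p. e (is p)) \<in> line scale e j) \<or> br (\<lambda>p. e (is p)) \<in> V)
   \<and> (\<forall>k is. \<forall>\<sigma>\<in>perms n. 0 < k \<and> k < n \<longrightarrow>
        (\<exists>j. prod_sp scale n br \<sigma> (\<lambda>r. if r < k then {e (is r)} else V) \<subseteq> line scale e j))
   \<and> ((\<exists>j. prod_sp scale n br id (\<lambda>_. V) \<subseteq> line scale e j)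
        \<or> prod_sp scale n br id (\<lambda>_. V) \<subseteq> V)"

definition uset :: "'v set \<Rightarrow> ('i \<Rightarrow> 'v) \<Rightarrow> 'i option \<Rightarrow> 'v set" where
  "uset V e j = (case j of Some i \<Rightarrow> {e i} | None \<Rightarrow> V)"

definition a_sig :: "('k::field \<Rightarrow> 'v::ab_group_add \<Rightarrow> 'v) \<Rightarrow> nat \<Rightarrow> ((nat \<Rightarrow> 'v) \<Rightarrow> 'v)
    \<Rightarrow> 'v set \<Rightarrow> ('i \<Rightarrow> 'v) \<Rightarrow> (nat \<Rightarrow> nat) \<Rightarrow> (nat \<Rightarrow> 'i option) \<Rightarrow> 'i option set" where
  "a_sig scale n br V e \<sigma> js =
     (let P = prod_sp scale n br \<sigma> (\<lambda>r. uset V e (js r)) in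
        {Some r | r. P \<noteq> {0} \<and> P \<subseteq> line scale e r}
      \<union> (if P \<noteq> {0} \<and> P \<subseteq> V then {None} else {}))"

(* b_sigma(j, bar j_2, ..., bar j_n), with jr = (j_2,...,j_n) *)
definition b_sig :: "('k::field \<Rightarrow> 'v::ab_group_add \<Rightarrow> 'v) \<Rightarrow> nat \<Rightarrow> ((nat \<Rightarrow> 'v) \<Rightarrow> 'v)
    \<Rightarrow> 'v set \<Rightarrow> ('i \<Rightarrow> 'v) \<Rightarrow> (nat \<Rightarrow> nat) \<Rightarrow> 'i option \<Rightarrow> (nat \<Rightarrow> 'i option) \<Rightarrow> 'i option set" where
  "b_sig scale n br V e \<sigma> j jr = {x. a_sig scale n br V e \<sigma> (ins 0 x jr) = {j}}"

definition mu :: "('k::field \<Rightarrow> 'v::ab_group_add \<Rightarrow> 'v) \<Rightarrow> nat \<Rightarrow> ((nat \<Rightarrow> 'v) \<Rightarrow> 'v)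
    \<Rightarrow> 'v set \<Rightarrow> ('i \<Rightarrow> 'v) \<Rightarrow> 'i option + 'i option
    \<Rightarrow> (nat \<Rightarrow> 'i option) + (nat \<Rightarrow> 'i option) \<Rightarrow> 'i option set" where
  "mu scale n br V e t X = (case (t, X) of
      (Inl j, Inl js) \<Rightarrow> (\<Union>\<sigma>\<in>perms n. a_sig scale n br V e \<sigma> (ins 0 j js))
    | (Inl j, Inr js) \<Rightarrow> (\<Union>\<sigma>\<in>perms n. b_sig scale n br V e \<sigma> j js)
    | (Inr j, Inl js) \<Rightarrow> (\<Union>k<n - 1. \<Union>\<sigma>\<in>perms n. b_sig scale n br V e \<sigma> (js k) (ins 0 j (del k js)))
    | (Inr j, Inr js) \<Rightarrow> {})"

definition phi :: "('k::field \<Rightarrow> 'v::ab_group_add \<Rightarrow> 'v) \<Rightarrow> nat \<Rightarrow> ((nat \<Rightarrow> 'v) \<Rightarrow> 'v)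
    \<Rightarrow> 'v set \<Rightarrow> ('i \<Rightarrow> 'v) \<Rightarrow> ('i + 'i) set
    \<Rightarrow> (nat \<Rightarrow> 'i option) + (nat \<Rightarrow> 'i option) \<Rightarrow> ('i + 'i) set" where
  "phi scale n br V e J X =
     (let K = {i. Some i \<in> (\<Union>t\<in>J. mu scale n br V e (map_sum Some Some t) X)}
      in Inl ` K \<union> Inr ` K)"

primrec phis :: "('k::field \<Rightarrow> 'v::ab_group_add \<Rightarrow> 'v) \<Rightarrow> nat \<Rightarrow> ((nat \<Rightarrow> 'v) \<Rightarrow> 'v)
    \<Rightarrow> 'v set \<Rightarrow> ('i \<Rightarrow> 'v) \<Rightarrow> 'i + 'i
    \<Rightarrow> (nat \<Rightarrow> (nat \<Rightarrow> 'i option) + (nat \<Rightarrow> 'i option)) \<Rightarrow> nat \<Rightarrow> ('i + 'i) set" where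
  "phis scale n br V e ti Xs 0 = {ti}"
| "phis scale n br V e ti Xs (Suc m) = phi scale n br V e (phis scale n br V e ti Xs m) (Xs m)"

definition connected :: "('k::field \<Rightarrow> 'v::ab_group_add \<Rightarrow> 'v) \<Rightarrow> nat \<Rightarrow> ((nat \<Rightarrow> 'v) \<Rightarrow> 'v)
    \<Rightarrow> 'v set \<Rightarrow> ('i \<Rightarrow> 'v) \<Rightarrow> 'i \<Rightarrow> 'i \<Rightarrow> bool" where
  "connected scale n br V e i j \<longleftrightarrow> i = j \<or>
     (\<exists>t\<ge>1. \<exists>Xs. \<exists>ti\<in>{Inl i, Inr i}.
        (\<forall>m. 1 \<le> m \<and> m < t \<longrightarrow> phis scale n br V e ti Xs m \<noteq> {})
      \<and> Inl j \<in> phis scale n br V e ti Xs t)"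

end

theory Submission
  imports Defs
begin

locale qmctx =
  fixes scale :: "'k::field \<Rightarrow> 'v::ab_group_add \<Rightarrow> 'v"
    and Lg :: "'g::ab_group_add \<Rightarrow> 'v set"
    and eps :: "'g \<Rightarrow> 'g \<Rightarrow> 'k"
    and n :: nat
    and br :: "(nat \<Rightarrow> 'v) \<Rightarrow> 'v"
    and V W :: "'v set"
    and e :: "'i \<Rightarrow> 'v"
    and i0 :: 'i
  assumes n2: "n \<ge> 2"
    and CG: "color_gLt scale Lg eps n br"
    and QM: "qm_basis scale Lg n br V W e"
begin

sublocale vector_space scale
  using CG unfolding color_gLt_def graded_space_def by auto

lemma GS: "graded_space scale Lg" using CG unfolding color_gLt_def by auto
lemma Mlin: "multilinear scale n br" using CG unfolding color_gLt_def by auto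
lemma GP: "graded_product Lg n br" using CG unfolding color_gLt_def by auto
lemma Lsub: "subspace (Lg g)" using GS unfolding graded_space_def by auto
lemma huniq: "hom_decomp Lg x c \<Longrightarrow> hom_decomp Lg x c' \<Longrightarrow> c = c'"
  using GS unfolding graded_space_def by metis
lemma hex: "\<exists>c. hom_decomp Lg x c"
  using GS unfolding graded_space_def by metis

lemma Vgr: "graded_subspace scale Lg V" using QM unfolding qm_basis_def by auto
lemma Vsub: "subspace V" using Vgr unfolding graded_subspace_def by auto
lemma VW0: "V \<inter> W = {0}" using QM unfolding qm_basis_def by auto
lemma VW: "\<exists>v\<in>V. \<exists>w\<in>W. x = v + w" using QM unfolding qm_basis_def by auto
lemma ehom: "\<exists>g. e i \<in> Lg g" using QM unfolding qm_basis_def by auto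
lemma LI: "lin_indep_family scale e" using QM unfolding qm_basis_def by auto
lemma Wspan: "span (range e) = W" using QM unfolding qm_basis_def by auto
lemma Q1: "(\<exists>j. br (\<lambda>p. e (is p)) \<in> line scale e j) \<or> br (\<lambda>p. e (is p)) \<in> V"
  using QM unfolding qm_basis_def by auto
lemma Q2: "\<sigma> \<in> perms n \<Longrightarrow> 0 < k \<Longrightarrow> k < n \<Longrightarrow>
   (\<exists>j. prod_sp scale n br \<sigma> (\<lambda>r. if r < k then {e (is r)} else V) \<subseteq> line scale e j)"
  using QM unfolding qm_basis_def by auto
lemma Q3: "(\<exists>j. prod_sp scale n br id (\<lambda>_. V) \<subseteq> line scale e j)
        \<or> prod_sp scale n br id (\<lambda>_. V) \<subseteq> V"
  using QM unfolding qm_basis_def by auto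

lemma LID: "finite S \<Longrightarrow> (\<Sum>i\<in>S. scale (c i) (e i)) = 0 \<Longrightarrow> i \<in> S \<Longrightarrow> c i = 0"
  using LI unfolding lin_indep_family_def by blast

lemma e_nz: "e i \<noteq> 0"
proof
  assume "e i = 0"
  then have "(\<Sum>m\<in>{i}. scale ((\<lambda>_. 1::'k) m) (e m)) = 0" by simp
  from LID[OF _ this] show False by simp
qed

lemma e_inj: "e a = e b \<Longrightarrow> a = b"
proof (rule ccontr)
  assume h: "e a = e b" "a \<noteq> b"
  let ?c = "\<lambda>m. if m = a then (1::'k) else -1"
  have "(\<Sum>m\<in>{a,b}. scale (?c m) (e m)) = 0"
    using h by (simp add: scale_minus_left)
  from LID[OF _ this, of a] h show False by simp
qed

lemma line_eq: "line scale e r = span {e r}"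
  unfolding line_def span_singleton by simp

lemma line_W: "line scale e r \<subseteq> W"
  unfolding line_eq Wspan[symmetric] by (rule span_mono) auto

lemma line_V: "x \<in> line scale e r \<Longrightarrow> x \<in> V \<Longrightarrow> x = 0"
  using line_W VW0 by auto

lemma e_W: "e i \<in> W" using Wspan span_base by blast

lemma e_notV: "e i \<notin> V"
  using e_W VW0 e_nz by auto

lemma br_cong: "(\<And>p. p < n \<Longrightarrow> f p = g p) \<Longrightarrow> br f = br g"
  using Mlin unfolding multilinear_def by blast

lemma br_scale: "k < n \<Longrightarrow> br (f(k := scale c a)) = scale c (br (f(k := a)))"
  using Mlin unfolding multilinear_def by blast

lemma br_add: "k < n \<Longrightarrow> br (f(k := a + b)) = br (f(k := a)) + br (f(k := b))"
  using Mlin unfolding multilinear_def by blast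

lemma br_zero: "k < n \<Longrightarrow> f k = 0 \<Longrightarrow> br f = 0"
proof -
  assume k: "k < n" and z: "f k = 0"
  have "f = f(k := scale 0 0)" using z by auto
  then have "br f = scale 0 (br (f(k := 0)))" using br_scale[OF k] by metis
  then show ?thesis by simp
qed


lemma perms_D: "\<tau> \<in> perms n \<Longrightarrow> \<tau> permutes {..<n}" by (simp add: perms_def)

lemma perm_lt: "\<tau> \<in> perms m \<Longrightarrow> r < m \<Longrightarrow> \<tau> r < m"
  using permutes_in_image[of \<tau> "{..<m}"] by (auto simp: perms_def)

lemma perm_inv: "\<tau> \<in> perms n \<Longrightarrow> inv \<tau> \<in> perms n"
  using permutes_inv[OF perms_D] by (simp add: perms_def)

lemma prod_sp_perm:
  assumes "\<tau> \<in> perms n"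
  shows "prod_sp scale n br (inv \<tau>) (\<lambda>r. A (\<tau> r)) = prod_sp scale n br id A"
proof -
  have p: "\<tau> permutes {..<n}" using assms perms_def by auto
  have "{br (\<lambda>p. x (inv \<tau> p)) | x. \<forall>r<n. x r \<in> A (\<tau> r)} = {br (\<lambda>p. x (id p)) | x. \<forall>r<n. x r \<in> A r}"
  proof (intro set_eqI iffI)
    fix z assume "z \<in> {br (\<lambda>p. x (inv \<tau> p)) | x. \<forall>r<n. x r \<in> A (\<tau> r)}"
    then obtain x where z: "z = br (\<lambda>p. x (inv \<tau> p))" and x: "\<forall>r<n. x r \<in> A (\<tau> r)" by auto
    have "\<forall>r<n. x (inv \<tau> r) \<in> A r"
    proof (intro allI impI)
      fix r assume "r<n"
      then have "inv \<tau> r < n" using perm_lt[OF perm_inv[OF assms]] by auto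
      then have "x (inv \<tau> r) \<in> A (\<tau> (inv \<tau> r))" using x by auto
      then show "x (inv \<tau> r) \<in> A r" using permutes_inverses(1)[OF p] by simp
    qed
    then show "z \<in> {br (\<lambda>p. x (id p)) | x. \<forall>r<n. x r \<in> A r}" using z by force
  next
    fix z assume "z \<in> {br (\<lambda>p. x (id p)) | x. \<forall>r<n. x r \<in> A r}"
    then obtain y where z: "z = br y" and y: "\<forall>r<n. y r \<in> A r" by auto
    have "\<forall>r<n. (y \<circ> \<tau>) r \<in> A (\<tau> r)" using y perm_lt[OF assms] by auto
    moreover have "(\<lambda>p. (y \<circ> \<tau>) (inv \<tau> p)) = y" using permutes_inverses(1)[OF p] by auto
    ultimately show "z \<in> {br (\<lambda>p. x (inv \<tau> p)) | x. \<forall>r<n. x r \<in> A (\<tau> r)}"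
      using z by (intro CollectI exI[of _ "y \<circ> \<tau>"]) simp
  qed
  then show ?thesis unfolding prod_sp_def by simp
qed

lemma prod_sp_cong:
  assumes "\<And>r. r < n \<Longrightarrow> A r = B r"
  shows "prod_sp scale n br \<sigma> A = prod_sp scale n br \<sigma> B"
proof -
  have "\<And>x. (\<forall>r<n. x r \<in> A r) = (\<forall>r<n. x r \<in> B r)" using assms by auto
  then show ?thesis unfolding prod_sp_def by simp
qed

lemma prod_sp_mem:
  assumes "\<And>r. r < n \<Longrightarrow> f r \<in> A r"
  shows "br f \<in> prod_sp scale n br id A"
  unfolding prod_sp_def
  by (rule span_base) (use assms in \<open>auto intro!: exI[of _ f]\<close>)

lemma sort_perm:
  assumes B: "B \<subseteq> {..<n}"
  shows "\<exists>\<sigma>. \<sigma> \<in> perms n \<and> (\<forall>q<n. \<sigma> q < card B \<longleftrightarrow> q \<in> B)"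
proof -
  let ?k = "card B"
  define D where "D = {..<n} - B"
  have fB: "finite B" using B finite_subset by blast
  have kn: "?k \<le> n" using card_mono[OF _ B] by simp
  have cD: "card D = n - ?k" unfolding D_def using card_Diff_subset[OF fB B] by simp
  obtain g1 where g1: "bij_betw g1 B {..<?k}"
    using finite_same_card_bij[OF fB, of "{..<?k}"] by auto
  obtain g2 where g2: "bij_betw g2 D {?k..<n}"
    using finite_same_card_bij[of D "{?k..<n}"] cD unfolding D_def by auto
  define \<sigma> where "\<sigma> q = (if q \<in> B then g1 q else if q \<in> D then g2 q else q)" for q
  have b1: "bij_betw \<sigma> B {..<?k}" using g1 by (rule bij_betw_cong[THEN iffD1, rotated]) (simp add: \<sigma>_def)
  have b2: "bij_betw \<sigma> D {?k..<n}" using g2 by (rule bij_betw_cong[THEN iffD1, rotated]) (auto simp add: \<sigma>_def D_def)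
  have "bij_betw \<sigma> (B \<union> D) ({..<?k} \<union> {?k..<n})" by (rule bij_betw_combine[OF b1 b2]) auto
  moreover have "B \<union> D = {..<n}" using B D_def by auto
  moreover have "{..<?k} \<union> {?k..<n} = {..<n}" using kn by auto
  ultimately have bb: "bij_betw \<sigma> {..<n} {..<n}" by simp
  have "\<sigma> permutes {..<n}"
    by (rule bij_imp_permutes[OF bb]) (use B in \<open>auto simp: \<sigma>_def D_def\<close>)
  moreover have "\<forall>q<n. \<sigma> q < ?k \<longleftrightarrow> q \<in> B"
  proof (intro allI impI)
    fix q assume q: "q < n"
    show "\<sigma> q < ?k \<longleftrightarrow> q \<in> B"
    proof (cases "q \<in> B")
      case True then show ?thesis using b1 unfolding bij_betw_def by auto
    next
      case False then have "q \<in> D" using q D_def by auto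
      then have "\<sigma> q \<in> {?k..<n}" using b2 unfolding bij_betw_def by auto
      then show ?thesis using False by auto
    qed
  qed
  ultimately show ?thesis by (auto simp: perms_def)
qed


lemma line_sub: "subspace (line scale e r)" unfolding line_eq by simp

lemma pattern_main:
  fixes js :: "nat \<Rightarrow> 'i option"
  defines "P \<equiv> prod_sp scale n br id (\<lambda>r. uset V e (js r))"
  defines "B \<equiv> {q. q < n \<and> js q \<noteq> None}"
  shows "(0 < card B \<and> card B < n \<longrightarrow> (\<exists>r. P \<subseteq> line scale e r)) \<and> ((\<exists>r. P \<subseteq> line scale e r) \<or> P \<subseteq> V)"
proof -
  let ?k = "card B"
  have Bsub: "B \<subseteq> {..<n}" unfolding B_def by auto
  have mixed: "\<exists>r. P \<subseteq> line scale e r" if k0: "0 < ?k" and kn: "?k < n"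
  proof -
    obtain \<sigma> where sp: "\<sigma> \<in> perms n" and sB: "\<forall>q<n. \<sigma> q < ?k \<longleftrightarrow> q \<in> B"
      using sort_perm[OF Bsub] by auto
    define "is" where "is r = the (js (inv \<sigma> r))" for r
    obtain j where j: "prod_sp scale n br \<sigma> (\<lambda>r. if r < ?k then {e (is r)} else V) \<subseteq> line scale e j"
      using Q2[OF sp k0 kn, of "is"] by auto
    have pi: "\<sigma> permutes {..<n}" using sp perms_def by auto
    have "prod_sp scale n br (inv (inv \<sigma>)) (\<lambda>r. uset V e (js (inv \<sigma> r))) = P"
      unfolding P_def by (rule prod_sp_perm[OF perm_inv[OF sp]])
    then have e1: "prod_sp scale n br \<sigma> (\<lambda>r. uset V e (js (inv \<sigma> r))) = P"
      using permutes_inv_inv[OF pi] by simp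
    have "prod_sp scale n br \<sigma> (\<lambda>r. if r < ?k then {e (is r)} else V)
        = prod_sp scale n br \<sigma> (\<lambda>r. uset V e (js (inv \<sigma> r)))"
    proof (rule prod_sp_cong)
      fix r assume r: "r < n"
      let ?q = "inv \<sigma> r"
      have q: "?q < n" using perm_lt[OF perm_inv[OF sp] r] .
      have sq: "\<sigma> ?q = r" using permutes_inverses(1)[OF pi] by simp
      have "r < ?k \<longleftrightarrow> ?q \<in> B" using sB q sq by metis
      then show "(if r < ?k then {e (is r)} else V) = uset V e (js ?q)"
        unfolding B_def is_def uset_def using q by (cases "js ?q") auto
    qed
    then show ?thesis using j e1 by auto
  qed
  have other: "(\<exists>r. P \<subseteq> line scale e r) \<or> P \<subseteq> V"
  proof (cases "?k = 0")
    case True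
    then have "B = {}" using finite_subset[OF Bsub] by auto
    then have "P = prod_sp scale n br id (\<lambda>_. V)"
      unfolding P_def B_def by (intro prod_sp_cong) (auto simp: uset_def split: option.splits)
    then show ?thesis using Q3 by simp
  next
    case False
    show ?thesis
    proof (cases "?k < n")
      case True then show ?thesis using mixed False by auto
    next
      case False
      then have "B = {..<n}" using card_subset_eq[OF _ Bsub] card_mono[OF _ Bsub] by fastforce
      then have allS: "\<forall>q<n. js q \<noteq> None" unfolding B_def by auto
      define "is" where "is r = the (js r)" for r
      let ?z = "br (\<lambda>p. e (is p))"
      have G: "{br (\<lambda>p. x (id p)) | x. \<forall>r<n. x r \<in> uset V e (js r)} \<subseteq> {?z}"
      proof
        fix y assume "y \<in> {br (\<lambda>p. x (id p)) | x. \<forall>r<n. x r \<in> uset V e (js r)}"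
        then obtain x where y: "y = br x" and x: "\<forall>r<n. x r \<in> uset V e (js r)" by auto
        have "br x = ?z"
        proof (rule br_cong)
          fix r assume r: "r < n"
          then obtain m where "js r = Some m" using allS by auto
          then show "x r = e (is r)" using x r unfolding is_def uset_def by auto
        qed
        then show "y \<in> {?z}" using y by simp
      qed
      from Q1[of "is"] show ?thesis
      proof
        assume "\<exists>j. ?z \<in> line scale e j"
        then obtain j where "?z \<in> line scale e j" by auto
        then have "P \<subseteq> line scale e j" unfolding P_def prod_sp_def
          using span_minimal[OF subset_trans[OF G], of "line scale e j"] line_sub by auto
        then show ?thesis by auto
      next
        assume "?z \<in> V"
        then have "P \<subseteq> V" unfolding P_def prod_sp_def
          using span_minimal[OF subset_trans[OF G], of V] Vsub by auto
        then show ?thesis by auto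
      qed
    qed
  qed
  show ?thesis using mixed other by blast
qed

lemma pattern1: "(\<exists>r. prod_sp scale n br id (\<lambda>r. uset V e (js r)) \<subseteq> line scale e r)
   \<or> prod_sp scale n br id (\<lambda>r. uset V e (js r)) \<subseteq> V"
  using pattern_main by blast

lemma pattern2:
  assumes "q1 < n" "js q1 = None" "q2 < n" "js q2 \<noteq> None"
  shows "\<exists>r. prod_sp scale n br id (\<lambda>r. uset V e (js r)) \<subseteq> line scale e r"
proof -
  define B where "B = {q. q < n \<and> js q \<noteq> None}"
  have f: "finite B" unfolding B_def by simp
  have "q2 \<in> B" using assms unfolding B_def by simp
  then have c0: "0 < card B" using f card_gt_0_iff by (metis empty_iff)
  have s1: "B \<subseteq> {..<n}" unfolding B_def by auto
  have "q1 \<notin> B" using assms(2) unfolding B_def by simp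
  then have ps: "B \<subset> {..<n}" using s1 assms(1) by blast
  have "card B < card {..<n}" by (rule psubset_card_mono[OF _ ps]) simp
  then have c1: "card B < n" by simp
  have "0 < card B \<and> card B < n \<longrightarrow> (\<exists>r. prod_sp scale n br id (\<lambda>r. uset V e (js r)) \<subseteq> line scale e r)"
    using pattern_main[of js] unfolding B_def by (rule conjunct1)
  then show ?thesis using c0 c1 by blast
qed


definition Cset where "Cset = {j. connected scale n br V e i0 j}"

lemma i0C: "i0 \<in> Cset" unfolding Cset_def connected_def by simp

lemma phis_cong: "(\<And>q. q < m \<Longrightarrow> Xs q = Xs' q) \<Longrightarrow> phis scale n br V e ti Xs m = phis scale n br V e ti Xs' m"
  by (induction m) auto

lemma phi_mono: "J \<subseteq> J' \<Longrightarrow> phi scale n br V e J X \<subseteq> phi scale n br V e J' X"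
  unfolding phi_def Let_def by blast

lemma phi_Inr: "Inl x \<in> phi scale n br V e J X \<Longrightarrow> Inr x \<in> phi scale n br V e J X"
  unfolding phi_def Let_def by blast

lemma phi_single: "Some r \<in> mu scale n br V e (map_sum Some Some t) X \<Longrightarrow> Inl r \<in> phi scale n br V e {t} X"
  unfolding phi_def Let_def by blast

lemma conn_step:
  assumes jC: "j \<in> Cset"
    and h: "Some r \<in> mu scale n br V e (Inl (Some j)) X \<or> Some r \<in> mu scale n br V e (Inr (Some j)) X"
  shows "r \<in> Cset"
proof -
  obtain t' where t': "t' \<in> {Inl j, Inr j}" and m: "Some r \<in> mu scale n br V e (map_sum Some Some t') X"
    using h by (metis insertI1 insertI2 map_sum.simps(1) map_sum.simps(2))
  have ph: "Inl r \<in> phi scale n br V e {t'} X" by (rule phi_single[OF m])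
  show ?thesis
  proof (cases "i0 = j")
    case True
    have "Inl r \<in> phis scale n br V e t' (\<lambda>_. X) 1" using ph by simp
    moreover have "t' \<in> {Inl i0, Inr i0}" using t' True by simp
    ultimately have "connected scale n br V e i0 r"
      unfolding connected_def by (intro disjI2 exI[of _ 1] exI[of _ "\<lambda>_. X"] bexI[of _ t']) auto
    then show ?thesis unfolding Cset_def by simp
  next
    case False
    then obtain t Xs ti where t1: "t \<ge> 1" and ti: "ti \<in> {Inl i0, Inr i0}"
      and ne: "\<forall>m. 1 \<le> m \<and> m < t \<longrightarrow> phis scale n br V e ti Xs m \<noteq> {}"
      and jin: "Inl j \<in> phis scale n br V e ti Xs t"
      using jC unfolding Cset_def connected_def by blast
    define Xs' where "Xs' = Xs(t := X)"
    have eq: "phis scale n br V e ti Xs' m = phis scale n br V e ti Xs m" if "m \<le> t" for m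
      using that by (intro phis_cong) (auto simp: Xs'_def)
    obtain t0 where t0: "t = Suc t0" using t1 by (cases t) auto
    have "Inr j \<in> phis scale n br V e ti Xs t" using jin unfolding t0 by (simp add: phi_Inr)
    then have "{t'} \<subseteq> phis scale n br V e ti Xs t" using jin t' by auto
    then have "phi scale n br V e {t'} X \<subseteq> phis scale n br V e ti Xs' (Suc t)"
      using eq[of t] by (simp add: Xs'_def phi_mono)
    then have fin: "Inl r \<in> phis scale n br V e ti Xs' (Suc t)" using ph by auto
    have ne': "\<forall>m. 1 \<le> m \<and> m < Suc t \<longrightarrow> phis scale n br V e ti Xs' m \<noteq> {}"
    proof (intro allI impI)
      fix m assume "1 \<le> m \<and> m < Suc t"
      then have "m \<le> t" "1 \<le> m" by auto
      then show "phis scale n br V e ti Xs' m \<noteq> {}"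
        using eq ne jin by (cases "m = t") auto
    qed
    have "connected scale n br V e i0 r"
      unfolding connected_def using ne' fin ti
      by (intro disjI2 exI[of _ "Suc t"] conjI) (auto intro!: exI[of _ Xs'] bexI[of _ ti])
    then show ?thesis unfolding Cset_def by simp
  qed
qed

lemma fwd:
  assumes js: "js p = Some j" and jC: "j \<in> Cset" and p: "p < n"
    and P0: "prod_sp scale n br id (\<lambda>r. uset V e (js r)) \<noteq> {0}"
    and Pl: "prod_sp scale n br id (\<lambda>r. uset V e (js r)) \<subseteq> line scale e r"
  shows "r \<in> Cset"
proof -
  define \<tau> where "\<tau> = transpose 0 p"
  have tp: "\<tau> \<in> perms n" unfolding \<tau>_def perms_def using p n2
    by (intro CollectI permutes_swap_id) auto
  define js' where "js' = (\<lambda>q. js (\<tau> q))"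
  have pe: "prod_sp scale n br (inv \<tau>) (\<lambda>q. uset V e (js' q)) = prod_sp scale n br id (\<lambda>q. uset V e (js q))"
    unfolding js'_def using prod_sp_perm[OF tp, of "\<lambda>q. uset V e (js q)"] by simp
  have js'eq: "ins 0 (Some j) (del 0 js') = js'"
    unfolding js'_def \<tau>_def ins_def del_def using js by (auto simp: fun_eq_iff transpose_def)
  have "Some r \<in> a_sig scale n br V e (inv \<tau>) js'" unfolding a_sig_def Let_def pe using P0 Pl by blast
  then have "Some r \<in> a_sig scale n br V e (inv \<tau>) (ins 0 (Some j) (del 0 js'))" using js'eq by simp
  then have "Some r \<in> mu scale n br V e (Inl (Some j)) (Inl (del 0 js'))"
    unfolding mu_def using perm_inv[OF tp] by auto
  then show ?thesis using conn_step[OF jC] by blast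
qed

lemma bwd:
  assumes js: "js p = Some j" and jC: "j \<in> Cset" and jq: "js q = Some m" and pq: "p \<noteq> q"
    and p: "p < n" and q: "q < n"
    and P0: "prod_sp scale n br id (\<lambda>r. uset V e (js r)) \<noteq> {0}"
    and PV: "prod_sp scale n br id (\<lambda>r. uset V e (js r)) \<subseteq> V"
  shows "m \<in> Cset"
proof -
  define p2 where "p2 = transpose 0 q p"
  have p2n: "p2 < n" unfolding p2_def using p q by (auto simp: transpose_def)
  have p20: "p2 \<noteq> 0" unfolding p2_def using pq by (auto simp: transpose_def)
  define \<tau> where "\<tau> = transpose 0 q \<circ> transpose 1 p2"
  have tp: "\<tau> \<in> perms n" unfolding \<tau>_def perms_def using p2n q n2
    by (intro CollectI permutes_compose permutes_swap_id) auto
  have t0: "\<tau> 0 = q" unfolding \<tau>_def using p20 by (simp add: transpose_def)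
  have t1: "\<tau> 1 = p" unfolding \<tau>_def p2_def by (simp add: transpose_def)
  define js' where "js' = (\<lambda>r. js (\<tau> r))"
  have pe: "prod_sp scale n br (inv \<tau>) (\<lambda>r. uset V e (js' r)) = prod_sp scale n br id (\<lambda>r. uset V e (js r))"
    unfolding js'_def using prod_sp_perm[OF tp, of "\<lambda>r. uset V e (js r)"] by simp
  define rest where "rest = del 0 (del 0 js')"
  have js'eq: "ins 0 (Some m) (ins 0 (Some j) rest) = js'"
  proof
    fix r show "ins 0 (Some m) (ins 0 (Some j) rest) r = js' r"
      unfolding rest_def ins_def del_def js'_def
      using t0 t1 js jq by (cases r; cases "r - 1") auto
  qed
  let ?P = "prod_sp scale n br id (\<lambda>r. uset V e (js r))"
  have noline: "\<not> ?P \<subseteq> line scale e r" for r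
  proof
    assume "?P \<subseteq> line scale e r"
    then have "?P \<subseteq> {0}" using PV line_V by blast
    moreover have "0 \<in> ?P" unfolding prod_sp_def by (rule span_zero)
    ultimately show False using P0 by blast
  qed
  have "a_sig scale n br V e (inv \<tau>) js' = {None}"
    unfolding a_sig_def Let_def pe using P0 PV noline by auto
  then have "Some m \<in> b_sig scale n br V e (inv \<tau>) None (ins 0 (Some j) rest)"
    unfolding b_sig_def using js'eq by simp
  moreover define X where "X = ins 0 None rest"
  moreover have "X 0 = None" "del 0 X = rest" unfolding X_def ins_def del_def by (auto simp: fun_eq_iff)
  ultimately have "Some m \<in> mu scale n br V e (Inr (Some j)) (Inl X)"
    unfolding mu_def using perm_inv[OF tp] n2
    by (auto intro!: bexI[of _ 0] bexI[of _ "inv \<tau>"])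
  then show ?thesis using conn_step[OF jC] by blast
qed


definition HV where "HV = {x \<in> V. \<exists>g. x \<in> Lg g}"
definition Leaves where "Leaves = range e \<union> HV"
definition pat where "pat f q = (if f q \<in> V then None else Some (SOME m. f q = e m))"

lemma leaf_hom: "x \<in> Leaves \<Longrightarrow> \<exists>g. x \<in> Lg g"
  unfolding Leaves_def HV_def using ehom by auto

lemma e_leaf: "e j \<in> Leaves" unfolding Leaves_def by auto

lemma pat_mem: "f q \<in> Leaves \<Longrightarrow> f q \<in> uset V e (pat f q)"
proof -
  assume l: "f q \<in> Leaves"
  show ?thesis
  proof (cases "f q \<in> V")
    case True then show ?thesis by (simp add: pat_def uset_def)
  next
    case False
    then have "\<exists>m. f q = e m" using l unfolding Leaves_def HV_def by auto
    then have "f q = e (SOME m. f q = e m)" by (rule someI_ex)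
    then show ?thesis using False by (simp add: pat_def uset_def)
  qed
qed

lemma pat_e: "f q = e j \<Longrightarrow> pat f q = Some j"
proof -
  assume h: "f q = e j"
  have "\<exists>m. f q = e m" using h by auto
  then have "f q = e (SOME m. f q = e m)" by (rule someI_ex)
  then have "(SOME m. f q = e m) = j" using h e_inj by metis
  then show ?thesis using h e_notV by (simp add: pat_def)
qed

lemma pat_Some: "f q \<in> Leaves \<Longrightarrow> pat f q = Some m \<Longrightarrow> f q = e m"
  using pat_mem[of f q] by (simp add: uset_def)

lemma br_in_P: "(\<And>q. q < n \<Longrightarrow> f q \<in> Leaves) \<Longrightarrow> br f \<in> prod_sp scale n br id (\<lambda>r. uset V e (pat f r))"
  by (rule prod_sp_mem) (rule pat_mem)

lemma leafprod: "(\<And>q. q < n \<Longrightarrow> f q \<in> Leaves) \<Longrightarrow> (\<exists>r. br f \<in> line scale e r) \<or> br f \<in> V"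
  using br_in_P[of f] pattern1[of "pat f"] by blast

lemma A_strong:
  assumes lv: "\<And>q. q < n \<Longrightarrow> f q \<in> Leaves" and p: "p < n" and fp: "f p = e j" and jC: "j \<in> Cset"
  shows "(\<exists>r\<in>Cset. br f \<in> line scale e r) \<or> br f \<in> V"
proof -
  let ?P = "prod_sp scale n br id (\<lambda>r. uset V e (pat f r))"
  have bP: "br f \<in> ?P" by (rule br_in_P[OF lv])
  from pattern1[of "pat f"] show ?thesis
  proof
    assume "\<exists>r. ?P \<subseteq> line scale e r"
    then obtain r where r: "?P \<subseteq> line scale e r" by auto
    show ?thesis
    proof (cases "br f = 0")
      case True then show ?thesis using subspace_0[OF Vsub] by simp
    next
      case False
      then have "?P \<noteq> {0}" using bP by auto
      then have "r \<in> Cset" using fwd[OF pat_e[of f p j, OF fp] jC p _ r] by simp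
      then show ?thesis using r bP by auto
    qed
  next
    assume "?P \<subseteq> V" then show ?thesis using bP by auto
  qed
qed

lemma bar:
  assumes lv: "\<And>q. q < n \<Longrightarrow> f q \<in> Leaves" and p: "p < n" and fp: "f p = e j" and jC: "j \<in> Cset"
    and bV: "br f \<in> V" and b0: "br f \<noteq> 0"
  shows "\<exists>q<n. q \<noteq> p \<and> (\<exists>m\<in>Cset. f q = e m)"
proof -
  let ?P = "prod_sp scale n br id (\<lambda>r. uset V e (pat f r))"
  have bP: "br f \<in> ?P" by (rule br_in_P[OF lv])
  have P0: "?P \<noteq> {0}" using bP b0 by auto
  have noline: "\<not> ?P \<subseteq> line scale e r" for r
    using bP bV b0 line_V by blast
  have PV: "?P \<subseteq> V" using pattern1[of "pat f"] noline by blast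
  have pj: "pat f p = Some j" by (rule pat_e[of f p j, OF fp])
  have "\<exists>q<n. q \<noteq> p \<and> pat f q \<noteq> None"
  proof (rule ccontr)
    assume c: "\<not> (\<exists>q<n. q \<noteq> p \<and> pat f q \<noteq> None)"
    define q1 where "q1 = (if p = 0 then 1 else 0::nat)"
    have "q1 < n" "q1 \<noteq> p" unfolding q1_def using n2 by auto
    then have "pat f q1 = None" using c by blast
    then obtain r where "?P \<subseteq> line scale e r" using pattern2[OF \<open>q1 < n\<close> _ p] pj by blast
    then show False using noline by blast
  qed
  then obtain q m where q: "q < n" "q \<noteq> p" and pm: "pat f q = Some m" by blast
  have "m \<in> Cset" by (rule bwd[of "pat f" p j q m, OF pj jC pm \<open>q \<noteq> p\<close>[symmetric] p q(1) P0 PV])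
  moreover have "f q = e m" by (rule pat_Some[OF lv[OF q(1)] pm])
  ultimately show ?thesis using q by blast
qed


definition Gn where "Gn = {br f | f. (\<forall>q<n. f q \<in> Leaves) \<and> (\<exists>p<n. \<exists>j\<in>Cset. f p = e j) \<and> br f \<in> V}"
definition Hs where "Hs = e ` Cset \<union> Gn"
definition Sid where "Sid = span Hs"

lemma Sid_sub: "subspace Sid" unfolding Sid_def by simp

lemma tuple_in_S:
  assumes lv: "\<And>q. q < n \<Longrightarrow> f q \<in> Leaves" and p: "p < n" and fp: "f p = e j" and jC: "j \<in> Cset"
  shows "br f \<in> Sid"
proof -
  from A_strong[of f p j, OF lv p fp jC] show ?thesis
  proof
    assume "\<exists>r\<in>Cset. br f \<in> line scale e r"
    then obtain r where r: "r \<in> Cset" "br f \<in> line scale e r" by auto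
    have "line scale e r \<subseteq> Sid" unfolding line_eq Sid_def Hs_def
      by (rule span_mono) (use r in auto)
    then show ?thesis using r by auto
  next
    assume "br f \<in> V"
    then have "br f \<in> Gn" unfolding Gn_def using lv p fp jC by blast
    then show ?thesis unfolding Sid_def Hs_def by (intro span_base) auto
  qed
qed

lemma line_scaled: "w \<in> line scale e r \<Longrightarrow> \<exists>c. w = scale c (e r)"
  unfolding line_def by auto

lemma br_hom: "(\<And>q. q < n \<Longrightarrow> f q \<in> Leaves) \<Longrightarrow> \<exists>g. br f \<in> Lg g"
proof -
  assume lv: "\<And>q. q < n \<Longrightarrow> f q \<in> Leaves"
  define d where "d q = (SOME g. f q \<in> Lg g)" for q
  have "\<forall>p<n. f p \<in> Lg (d p)" unfolding d_def using lv leaf_hom by (metis someI_ex)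
  then have "br f \<in> Lg (\<Sum>p<n. d p)" using GP unfolding graded_product_def by blast
  then show ?thesis by blast
qed

lemma upd_S_V:
  assumes lv: "\<And>q. q < n \<Longrightarrow> u q \<in> Leaves" and i: "i < n" and wV: "w \<in> V" and wl: "\<And>q. q < n \<Longrightarrow> g q \<in> Leaves"
    and w: "w = br g" and q': "q' < n" "q' \<noteq> i" and uq: "u q' = e m" and mC: "m \<in> Cset"
  shows "br (u(i := w)) \<in> Sid"
proof -
  have "w \<in> Leaves" using br_hom[OF wl] wV w unfolding Leaves_def HV_def by auto
  then have "\<And>q. q < n \<Longrightarrow> (u(i := w)) q \<in> Leaves" using lv by auto
  moreover have "(u(i := w)) q' = e m" using q' uq by simp
  ultimately show ?thesis using tuple_in_S q'(1) mC by blast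
qed

lemma upd_S_line:
  assumes lv: "\<And>q. q < n \<Longrightarrow> u q \<in> Leaves" and i: "i < n" and w: "w = scale c (e r)"
    and q': "q' < n" and uq: "(u(i := e r)) q' = e m" and mC: "m \<in> Cset"
  shows "br (u(i := w)) \<in> Sid"
proof -
  have "\<And>q. q < n \<Longrightarrow> (u(i := e r)) q \<in> Leaves" using lv e_leaf by auto
  then have "br (u(i := e r)) \<in> Sid" using tuple_in_S q' uq mC by blast
  then have "scale c (br (u(i := e r))) \<in> Sid" using Sid_sub subspace_scale by blast
  then show ?thesis using br_scale[OF i, of u c "e r"] w by simp
qed

lemma term_in_S:
  assumes lx: "\<And>q. q < n \<Longrightarrow> xs q \<in> Leaves" and p0: "p0 < n" and xp: "xs p0 = e j0" and j0C: "j0 \<in> Cset"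
    and bV: "br xs \<in> V" and b0: "br xs \<noteq> 0" and s1: "s1 \<in> perms n" and i: "i < n"
    and lg: "\<And>q. q < n \<Longrightarrow> g q \<in> Leaves" and gC: "s1 i = p0 \<Longrightarrow> \<exists>jj<n. g jj = e j0"
  shows "br ((xs \<circ> s1)(i := br g)) \<in> Sid"
proof -
  let ?u = "xs \<circ> s1"
  have lu: "\<And>q. q < n \<Longrightarrow> ?u q \<in> Leaves" using lx perm_lt[OF s1] by simp
  have pi: "s1 permutes {..<n}" using s1 perms_def by auto
  show ?thesis
  proof (cases "s1 i = p0")
    case False
    define q' where "q' = inv s1 p0"
    have q'n: "q' < n" unfolding q'_def using perm_lt[OF perm_inv[OF s1] p0] .
    have sq: "s1 q' = p0" unfolding q'_def using permutes_inverses(1)[OF pi] by simp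
    have qi: "q' \<noteq> i" using sq False by auto
    have uq: "?u q' = e j0" using sq xp by simp
    from leafprod[of g, OF lg] show ?thesis
    proof
      assume "\<exists>r. br g \<in> line scale e r"
      then obtain r c where bg: "br g = scale c (e r)" using line_scaled by blast
      have "(?u(i := e r)) q' = e j0" using uq qi by simp
      then show ?thesis using upd_S_line[of ?u i "br g" c r q' j0, OF lu i bg q'n _ j0C] by simp
    next
      assume "br g \<in> V"
      then show ?thesis using upd_S_V[of ?u i "br g" g q' j0, OF lu i _ lg refl q'n qi uq j0C] by simp
    qed
  next
    case True
    obtain jj where jj: "jj < n" "g jj = e j0" using gC[OF True] by blast
    from A_strong[of g jj j0, OF lg jj j0C] show ?thesis
    proof
      assume "\<exists>r\<in>Cset. br g \<in> line scale e r"
      then obtain r c where rC: "r \<in> Cset" and bg: "br g = scale c (e r)" using line_scaled by blast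
      show ?thesis using upd_S_line[of ?u i "br g" c r i r, OF lu i bg i _ rC] by simp
    next
      assume gV: "br g \<in> V"
      obtain q0 m where q0: "q0 < n" "q0 \<noteq> p0" and mC: "m \<in> Cset" and xq: "xs q0 = e m"
        using bar[of xs p0 j0, OF lx p0 xp j0C bV b0] by blast
      define q' where "q' = inv s1 q0"
      have q'n: "q' < n" unfolding q'_def using perm_lt[OF perm_inv[OF s1] q0(1)] .
      have sq: "s1 q' = q0" unfolding q'_def using permutes_inverses(1)[OF pi] by simp
      have qi: "q' \<noteq> i" using sq True q0(2) by auto
      have uq: "?u q' = e m" using sq xq by simp
      show ?thesis using upd_S_V[of ?u i "br g" g q' m, OF lu i gV lg refl q'n qi uq mC] .
    qed
  qed
qed

lemma ins_del: "ins i z (del i g) = g(i := z)"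
  by (auto simp: fun_eq_iff ins_def del_def)

lemma core:
  assumes k: "k < n" and fk: "f k \<in> Hs" and lv: "\<And>q. q < n \<Longrightarrow> q \<noteq> k \<Longrightarrow> f q \<in> Leaves"
  shows "br f \<in> Sid"
proof (cases "f k \<in> e ` Cset")
  case True
  then obtain j where j: "j \<in> Cset" "f k = e j" by auto
  have "\<And>q. q < n \<Longrightarrow> f q \<in> Leaves" using lv j e_leaf by metis
  then show ?thesis using tuple_in_S k j by blast
next
  case False
  then have "f k \<in> Gn" using fk Hs_def by auto
  then obtain xs p0 j0 where fkx: "f k = br xs" and lx: "\<And>q. q < n \<Longrightarrow> xs q \<in> Leaves"
    and p0: "p0 < n" and j0C: "j0 \<in> Cset" and xp: "xs p0 = e j0" and bV: "br xs \<in> V"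
    unfolding Gn_def by blast
  show ?thesis
  proof (cases "br xs = 0")
    case True then show ?thesis using br_zero[OF k] fkx subspace_0[OF Sid_sub] by simp
  next
    case b0: False
    obtain alpha where GI: "gLt_identity scale Lg eps n br alpha" using CG unfolding color_gLt_def by blast
    define ys where "ys = del k f"
    have ly: "ys p \<in> Leaves" if "p < n - 1" for p
      unfolding ys_def del_def using that lv by auto
    define dx where "dx p = (SOME g. xs p \<in> Lg g)" for p
    define dy where "dy p = (SOME g. ys p \<in> Lg g)" for p
    have hx: "\<forall>p<n. xs p \<in> Lg (dx p)" unfolding dx_def using lx leaf_hom by (metis someI_ex)
    have hy: "\<forall>p<n - 1. ys p \<in> Lg (dy p)" unfolding dy_def using ly leaf_hom by (metis someI_ex)
    have fe: "f = ins k (br xs) ys" unfolding ys_def ins_del using fkx by auto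
    have id: "br (ins k (br xs) ys) =
        (\<Sum>i<n. \<Sum>j<n. \<Sum>s1\<in>perms n. \<Sum>s2\<in>perms (n - 1).
           scale (alpha i j k s1 s2 * color_factor eps n k i j s1 s2 dx dy)
             (br (ins i (br (ins j (xs (s1 i)) (ys \<circ> s2))) (del i (xs \<circ> s1)))))"
      using GI k hx hy unfolding gLt_identity_def by blast
    have tm: "br (ins i (br (ins j (xs (s1 i)) (ys \<circ> s2))) (del i (xs \<circ> s1))) \<in> Sid"
      if i: "i < n" and j: "j < n" and s1: "s1 \<in> perms n" and s2: "s2 \<in> perms (n - 1)" for i j s1 s2
    proof -
      have lg: "ins j (xs (s1 i)) (ys \<circ> s2) q \<in> Leaves" if q: "q < n" for q
      proof -
        have "s1 i < n" using perm_lt[OF s1 i] .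
        moreover have "\<And>r. r < n - 1 \<Longrightarrow> s2 r < n - 1" using perm_lt[OF s2] .
        ultimately show ?thesis unfolding ins_def using q j lx ly by auto
      qed
      have gC: "\<exists>jj<n. ins j (xs (s1 i)) (ys \<circ> s2) jj = e j0" if "s1 i = p0"
        using j that xp by (intro exI[of _ j]) (simp add: ins_def)
      show ?thesis unfolding ins_del
        by (rule term_in_S[OF lx p0 xp j0C bV b0 s1 i lg gC])
    qed
    have "(\<Sum>i<n. \<Sum>j<n. \<Sum>s1\<in>perms n. \<Sum>s2\<in>perms (n - 1).
           scale (alpha i j k s1 s2 * color_factor eps n k i j s1 s2 dx dy)
             (br (ins i (br (ins j (xs (s1 i)) (ys \<circ> s2))) (del i (xs \<circ> s1))))) \<in> Sid"
      by (intro subspace_sum[OF Sid_sub] subspace_scale[OF Sid_sub] tm) auto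
    then show ?thesis using id fe by simp
  qed
qed


lemma expand:
  assumes T: "subspace T" and base: "\<And>f. (\<And>q. q < n \<Longrightarrow> f q \<in> A q) \<Longrightarrow> br f \<in> T"
    and fa: "\<And>q. q < n \<Longrightarrow> f q \<in> span (A q)"
  shows "br f \<in> T"
proof -
  have main: "\<forall>f. (\<forall>q<m. f q \<in> span (A q)) \<and> (\<forall>q. m \<le> q \<and> q < n \<longrightarrow> f q \<in> A q) \<longrightarrow> br f \<in> T" for m
  proof (induction m)
    case 0
    then show ?case using base by auto
  next
    case (Suc m)
    show ?case
    proof (intro allI impI)
      fix f assume h: "(\<forall>q<Suc m. f q \<in> span (A q)) \<and> (\<forall>q. Suc m \<le> q \<and> q < n \<longrightarrow> f q \<in> A q)"
      show "br f \<in> T"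
      proof (cases "m < n")
        case False
        then show ?thesis using Suc.IH h by auto
      next
        case mn: True
        have fm: "f m \<in> span (A m)" using h by auto
        have "br (f(m := a)) \<in> T" if "a \<in> span (A m)" for a
          using that
        proof (induction rule: span_induct_alt)
          case base
          have z: "br (f(m := 0)) = 0" by (rule br_zero[OF mn]) simp
          show ?case unfolding z by (rule subspace_0[OF T])
        next
          case (step c x y)
          have "br (f(m := x)) \<in> T"
            using Suc.IH h step(1) by (auto simp: less_Suc_eq)
          then have "scale c (br (f(m := x))) + br (f(m := y)) \<in> T"
            using step(2) T subspace_add subspace_scale by blast
          then show ?case unfolding br_add[OF mn, of f "scale c x" y] br_scale[OF mn, of f c x] .
        qed
        from this[OF fm] show ?thesis by simp
      qed
    qed
  qed
  have "(\<forall>q<n. f q \<in> span (A q)) \<and> (\<forall>q. n \<le> q \<and> q < n \<longrightarrow> f q \<in> A q)" using fa by auto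
  then show ?thesis using main[of n] by blast
qed

lemma span_leaves: "x \<in> span Leaves"
proof -
  obtain v w where v: "v \<in> V" and w: "w \<in> W" and x: "x = v + w" using VW by blast
  have "w \<in> span Leaves" using w Wspan span_mono[of "range e" Leaves] unfolding Leaves_def by auto
  moreover have "v \<in> span Leaves"
  proof -
    obtain c where c: "hom_decomp Lg v c" using hex by blast
    have cV: "c g \<in> V" for g using Vgr c v unfolding graded_subspace_def by blast
    have cL: "c g \<in> Lg g" for g using c unfolding hom_decomp_def by blast
    have "v = (\<Sum>g\<in>{g. c g \<noteq> 0}. c g)" using c unfolding hom_decomp_def by blast
    moreover have "(\<Sum>g\<in>{g. c g \<noteq> 0}. c g) \<in> span Leaves"
      using cV cL by (intro span_sum span_base) (auto simp: Leaves_def HV_def)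
    ultimately show ?thesis by simp
  qed
  ultimately show ?thesis using x span_add by simp
qed

lemma ideal_prod: "\<sigma> \<in> perms n \<Longrightarrow> prod_sp scale n br \<sigma> (\<lambda>r. if r = 0 then Sid else UNIV) \<subseteq> Sid"
proof -
  assume sp: "\<sigma> \<in> perms n"
  have pi: "\<sigma> permutes {..<n}" using sp perms_def by auto
  have "br (\<lambda>p. x (\<sigma> p)) \<in> Sid" if x: "\<forall>r<n. x r \<in> (if r = 0 then Sid else UNIV)" for x
  proof -
    define k where "k = inv \<sigma> 0"
    have k: "k < n" unfolding k_def using perm_lt[OF perm_inv[OF sp], of 0] n2 by auto
    have "x 0 \<in> (if 0 = (0::nat) then Sid else UNIV)" using x[rule_format, of 0] n2 by simp
    then have fk: "x (\<sigma> k) \<in> Sid" unfolding k_def using permutes_inverses(1)[OF pi] by simp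
    show ?thesis
    proof (rule expand[OF Sid_sub, where A = "\<lambda>q. if q = k then Hs else Leaves"])
      fix f assume fq: "\<And>q. q < n \<Longrightarrow> f q \<in> (if q = k then Hs else Leaves)"
      have "f k \<in> Hs" using fq[OF k] by simp
      moreover have lv: "f q \<in> Leaves" if "q < n" "q \<noteq> k" for q using fq[OF that(1)] that(2) by simp
      ultimately show "br f \<in> Sid" using core[OF k] by blast
    next
      fix q assume "q < n"
      show "x (\<sigma> q) \<in> span (if q = k then Hs else Leaves)"
      proof (cases "q = k")
        case True then show ?thesis using fk unfolding Sid_def by simp
      next
        case False then show ?thesis using span_leaves by simp
      qed
    qed
  qed
  then show ?thesis unfolding prod_sp_def by (intro span_minimal[OF _ Sid_sub]) blast
qed

lemma hd_intro:
  assumes "finite F" "{g. c g \<noteq> 0} \<subseteq> F" "\<And>g. c g \<in> Lg g" "x = (\<Sum>g\<in>F. c g)"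
  shows "hom_decomp Lg x c"
proof -
  have "(\<Sum>g\<in>{g. c g \<noteq> 0}. c g) = (\<Sum>g\<in>F. c g)"
    by (rule sum.mono_neutral_left) (use assms in auto)
  then show ?thesis unfolding hom_decomp_def using assms finite_subset by metis
qed

lemma hd_sum:
  assumes "hom_decomp Lg x c" "finite F" "{g. c g \<noteq> 0} \<subseteq> F"
  shows "x = (\<Sum>g\<in>F. c g)"
proof -
  have "(\<Sum>g\<in>{g. c g \<noteq> 0}. c g) = (\<Sum>g\<in>F. c g)"
    by (rule sum.mono_neutral_left) (use assms in auto)
  then show ?thesis using assms(1) unfolding hom_decomp_def by simp
qed

lemma span_graded:
  assumes H: "\<And>h. h \<in> H \<Longrightarrow> \<exists>g. h \<in> Lg g"
  shows "graded_subspace scale Lg (span H)"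
proof -
  define T where "T = {x. \<forall>c. hom_decomp Lg x c \<longrightarrow> (\<forall>g. c g \<in> span H)}"
  have fs: "finite {g. c g \<noteq> 0}" if "hom_decomp Lg x c" for x c using that unfolding hom_decomp_def by blast
  have cl: "c g \<in> Lg g" if "hom_decomp Lg x c" for x c g using that unfolding hom_decomp_def by blast
  have "subspace T"
  proof (rule subspaceI)
    have "hom_decomp Lg 0 (\<lambda>_. 0)" by (rule hd_intro[of "{}"]) (auto intro: subspace_0[OF Lsub])
    then show "0 \<in> T" unfolding T_def
    proof (intro CollectI allI impI)
      fix c g assume h0: "hom_decomp Lg 0 (\<lambda>_. 0)" and hc: "hom_decomp Lg 0 c"
      have "c = (\<lambda>_. 0)" by (rule huniq[OF hc h0])
      then show "c g \<in> span H" using span_zero by simp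
    qed
  next
    fix x y assume x: "x \<in> T" and y: "y \<in> T"
    obtain cx where cx: "hom_decomp Lg x cx" using hex by blast
    obtain cy where cy: "hom_decomp Lg y cy" using hex by blast
    let ?F = "{g. cx g \<noteq> 0} \<union> {g. cy g \<noteq> 0}"
    have fF: "finite ?F" using fs[OF cx] fs[OF cy] by simp
    have "hom_decomp Lg (x + y) (\<lambda>g. cx g + cy g)"
    proof (rule hd_intro[OF fF])
      show "{g. cx g + cy g \<noteq> 0} \<subseteq> ?F" by auto
      show "cx g + cy g \<in> Lg g" for g using cl[OF cx] cl[OF cy] subspace_add[OF Lsub] by blast
      show "x + y = (\<Sum>g\<in>?F. cx g + cy g)"
        using hd_sum[OF cx fF] hd_sum[OF cy fF] by (simp add: sum.distrib)
    qed
    moreover have "cx g + cy g \<in> span H" for g using x y cx cy unfolding T_def by (blast intro: span_add)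
    ultimately show "x + y \<in> T" unfolding T_def
    proof (intro CollectI allI impI)
      fix c g assume h0: "hom_decomp Lg (x + y) (\<lambda>g. cx g + cy g)" and s: "\<And>g. cx g + cy g \<in> span H"
        and hc: "hom_decomp Lg (x + y) c"
      have "c = (\<lambda>g. cx g + cy g)" by (rule huniq[OF hc h0])
      then show "c g \<in> span H" using s by simp
    qed
  next
    fix a x assume x: "x \<in> T"
    obtain cx where cx: "hom_decomp Lg x cx" using hex by blast
    let ?F = "{g. cx g \<noteq> 0}"
    have fF: "finite ?F" using fs[OF cx] .
    have "hom_decomp Lg (scale a x) (\<lambda>g. scale a (cx g))"
    proof (rule hd_intro[OF fF])
      show "{g. scale a (cx g) \<noteq> 0} \<subseteq> ?F" by auto
      show "scale a (cx g) \<in> Lg g" for g using cl[OF cx] subspace_scale[OF Lsub] by blast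
      show "scale a x = (\<Sum>g\<in>?F. scale a (cx g))"
        using hd_sum[OF cx fF] by (simp add: scale_sum_right)
    qed
    moreover have "scale a (cx g) \<in> span H" for g using x cx unfolding T_def by (blast intro: span_scale)
    ultimately show "scale a x \<in> T" unfolding T_def
    proof (intro CollectI allI impI)
      fix c g assume h0: "hom_decomp Lg (scale a x) (\<lambda>g. scale a (cx g))" and s: "\<And>g. scale a (cx g) \<in> span H"
        and hc: "hom_decomp Lg (scale a x) c"
      have "c = (\<lambda>g. scale a (cx g))" by (rule huniq[OF hc h0])
      then show "c g \<in> span H" using s by simp
    qed
  qed
  moreover have "H \<subseteq> T"
  proof
    fix h assume "h \<in> H"
    then obtain g0 where g0: "h \<in> Lg g0" using H by blast
    define c0 where "c0 g = (if g = g0 then h else 0)" for g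
    have "hom_decomp Lg h c0"
      by (rule hd_intro[of "{g0}"]) (auto simp: c0_def g0 intro: subspace_0[OF Lsub])
    moreover have "c0 g \<in> span H" for g using \<open>h \<in> H\<close> by (auto simp: c0_def intro: span_base span_zero)
    ultimately show "h \<in> T" unfolding T_def
    proof (intro CollectI allI impI)
      fix c g assume h0: "hom_decomp Lg h c0" and s: "\<And>g. c0 g \<in> span H"
        and hc: "hom_decomp Lg h c"
      have "c = c0" by (rule huniq[OF hc h0])
      then show "c g \<in> span H" using s by simp
    qed
  qed
  ultimately have "span H \<subseteq> T" by (rule span_minimal[rotated])
  then show ?thesis unfolding graded_subspace_def T_def by auto
qed

lemma Sid_ideal: "gLt_ideal scale Lg n br Sid"
proof -
  have "\<And>h. h \<in> Hs \<Longrightarrow> \<exists>g. h \<in> Lg g"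
    unfolding Hs_def Gn_def using ehom br_hom by blast
  then have "graded_subspace scale Lg Sid" unfolding Sid_def by (rule span_graded)
  then show ?thesis unfolding gLt_ideal_def using ideal_prod by blast
qed

lemma in_span_C: "e j \<in> span (e ` Cset) \<Longrightarrow> j \<in> Cset"
proof (rule ccontr)
  assume ej: "e j \<in> span (e ` Cset)" and jn: "j \<notin> Cset"
  obtain t r where t: "finite t" "t \<subseteq> e ` Cset" and sm: "e j = (\<Sum>a\<in>t. scale (r a) a)"
    using ej unfolding span_explicit by blast
  define F where "F = {i \<in> Cset. e i \<in> t}"
  have tF: "t = e ` F" using t(2) unfolding F_def by auto
  have inj: "inj_on e F" using e_inj by (meson inj_onI)
  have fF: "finite F" using t(1) tF finite_image_iff[OF inj] by simp
  have jF: "j \<notin> F" using jn F_def by auto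
  have s2: "e j = (\<Sum>i\<in>F. scale (r (e i)) (e i))" using sm tF sum.reindex[OF inj, of "\<lambda>a. scale (r a) a"] by simp
  define c where "c i = (if i = j then -1 else r (e i))" for i
  have "(\<Sum>i\<in>insert j F. scale (c i) (e i)) = - e j + (\<Sum>i\<in>F. scale (c i) (e i))"
    using fF jF by (simp add: c_def)
  also have "(\<Sum>i\<in>F. scale (c i) (e i)) = (\<Sum>i\<in>F. scale (r (e i)) (e i))"
    using jF by (intro sum.cong) (auto simp: c_def)
  finally have "(\<Sum>i\<in>insert j F. scale (c i) (e i)) = 0" using s2 by simp
  then have "c j = 0" using LID[of "insert j F" c j] fF by simp
  then show False by (simp add: c_def)
qed

lemma all_conn:
  assumes SA: "simple_alg scale Lg n br"
  shows "connected scale n br V e i0 j"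
proof -
  have "e i0 \<in> Sid" unfolding Sid_def Hs_def using i0C by (intro span_base) auto
  then have "Sid \<noteq> {0}" using e_nz by auto
  then have SU: "Sid = UNIV" using SA Sid_ideal unfolding simple_alg_def by blast
  have "e j \<in> span (e ` Cset \<union> Gn)" using SU unfolding Sid_def Hs_def by auto
  then obtain a b where ab: "e j = a + b" and a: "a \<in> span (e ` Cset)" and b: "b \<in> span Gn"
    unfolding span_Un by blast
  have "span Gn \<subseteq> V" by (rule span_minimal[OF _ Vsub]) (auto simp: Gn_def)
  then have bV: "b \<in> V" using b by auto
  have Wsub: "subspace W" using Wspan subspace_span by metis
  have aW: "a \<in> W" using a span_mono[of "e ` Cset" "range e"] Wspan by auto
  have "b = e j - a" using ab by (simp add: algebra_simps)
  then have "b \<in> W" using aW e_W subspace_diff[OF Wsub] by simp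
  then have "b = 0" using bV VW0 by auto
  then have "e j \<in> span (e ` Cset)" using ab a by simp
  then have "j \<in> Cset" by (rule in_span_C)
  then show ?thesis unfolding Cset_def by simp
qed

end

theorem corollary3p10:
  fixes scale :: "'k::field \<Rightarrow> 'v::ab_group_add \<Rightarrow> 'v"
    and Lg :: "'g::ab_group_add \<Rightarrow> 'v set"
    and eps :: "'g \<Rightarrow> 'g \<Rightarrow> 'k"
    and n :: nat
    and br :: "(nat \<Rightarrow> 'v) \<Rightarrow> 'v"
    and V W :: "'v set"
    and e :: "'i \<Rightarrow> 'v"
  assumes "n \<ge> 2"
    and "color_gLt scale Lg eps n br"
    and "qm_basis scale Lg n br V W e"
    and "simple_alg scale Lg n br"
  shows "\<forall>i j. connected scale n br V e i j"
proof (intro allI)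
  fix i j
  interpret qmctx scale Lg eps n br V W e i
    using assms(1-3) by unfold_locales
  show "connected scale n br V e i j" using all_conn[OF assms(4)] .
qed

end
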